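(* Let $G=(V,E)$ be a finite perfect graph with vertex cost function $w:V\to\mathbb{Q}_+$, and consider the investment management game on $G$ (defined in the context). A function $y:\mathcal{M}\to\mathbb{Q}_+$ on the set $\mathcal{M}$ of maximal cliques of $G$ is a core imputation of this game if and only if $y$ is an optimal solution of the linear program $$ \text{minimize } \sum_{Q\in\mathcal{M}} y_Q \quad\text{subject to}\quad \sum_{Q\in\mathcal{M}:\, v\in Q} y_Q \ge w_v \ \ \forall v\in V,\qquad y_Q\ge 0\ \ \forall Q\in\mathcal{M}. $$
   Context: A graph $G$ is perfect if for every $S\subseteq V$ the induced subgraph $G(S)$ satisfies $\omega(G(S))=\chi(G(S))$ (clique number equals chromatic number). A stable (independent) set is a set of pairwise non-adjacent vertices. The investment management game on $G$ with costs $w$: vertices are assets, and each maximal clique of $G$ is an investment firm; $\mathcal{M}$ denotes the set of maximal cliques. Every subset $S\subseteq V$ is a scenario, and $\mathrm{cost}(S)$ is the maximum of $\sum_{v\in I} w_v$ over stable sets $I$ of the induced subgraph $G(S)$. The total money is $T=\mathrm{cost}(V)$. An imputation is a function $y:\mathcal{M}\to\mathbb{Q}_+$ with $\sum_{Q\in\mathcal{M}} y_Q = T$. For a scenario $S$, $\mathrm{money}(S)=\sum_{Q\in\mathcal{M}:\, Q\cap S\neq\emptyset} y_Q$. An imputation $y$ is in the core (is a core imputation) if $\mathrm{money}(S)\ge \mathrm{cost}(S)$ for every $S\subseteq V$. *)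

theory Defs
  imports Complex_Main
begin

text \<open>A finite simple graph: finite vertex set V and a symmetric, irreflexive
adjacency relation E (only its restriction to V matters).\<close>

definition graph :: "'a set \<Rightarrow> ('a \<Rightarrow> 'a \<Rightarrow> bool) \<Rightarrow> bool" where
  "graph V E \<longleftrightarrow> finite V \<and> (\<forall>u\<in>V. \<forall>v\<in>V. E u v \<longrightarrow> E v u) \<and> (\<forall>v\<in>V. \<not> E v v)"

definition clique :: "'a set \<Rightarrow> ('a \<Rightarrow> 'a \<Rightarrow> bool) \<Rightarrow> 'a set \<Rightarrow> bool" where
  "clique V E Q \<longleftrightarrow> Q \<subseteq> V \<and> (\<forall>u\<in>Q. \<forall>v\<in>Q. u \<noteq> v \<longrightarrow> E u v)"

definition maximal_cliques :: "'a set \<Rightarrow> ('a \<Rightarrow> 'a \<Rightarrow> bool) \<Rightarrow> 'a set set" where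
  "maximal_cliques V E = {Q. clique V E Q \<and> (\<forall>Q'. clique V E Q' \<and> Q \<subseteq> Q' \<longrightarrow> Q' = Q)}"

definition stable_set :: "'a set \<Rightarrow> ('a \<Rightarrow> 'a \<Rightarrow> bool) \<Rightarrow> 'a set \<Rightarrow> bool" where
  "stable_set S E I \<longleftrightarrow> I \<subseteq> S \<and> (\<forall>u\<in>I. \<forall>v\<in>I. \<not> E u v)"

definition clique_number :: "'a set \<Rightarrow> ('a \<Rightarrow> 'a \<Rightarrow> bool) \<Rightarrow> nat" where
  "clique_number S E = Max {card Q | Q. clique S E Q}"

definition chromatic_number :: "'a set \<Rightarrow> ('a \<Rightarrow> 'a \<Rightarrow> bool) \<Rightarrow> nat" where
  "chromatic_number S E = (LEAST k. \<exists>c :: 'a \<Rightarrow> nat.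
      (\<forall>v\<in>S. c v < k) \<and> (\<forall>u\<in>S. \<forall>v\<in>S. E u v \<longrightarrow> c u \<noteq> c v))"

definition perfect :: "'a set \<Rightarrow> ('a \<Rightarrow> 'a \<Rightarrow> bool) \<Rightarrow> bool" where
  "perfect V E \<longleftrightarrow> (\<forall>S\<subseteq>V. clique_number S E = chromatic_number S E)"

definition cost :: "('a \<Rightarrow> 'a \<Rightarrow> bool) \<Rightarrow> ('a \<Rightarrow> rat) \<Rightarrow> 'a set \<Rightarrow> rat" where
  "cost E w S = Max {sum w I | I. stable_set S E I}"

definition money :: "'a set \<Rightarrow> ('a \<Rightarrow> 'a \<Rightarrow> bool) \<Rightarrow> ('a set \<Rightarrow> rat) \<Rightarrow> 'a set \<Rightarrow> rat" where
  "money V E y S = sum y {Q \<in> maximal_cliques V E. Q \<inter> S \<noteq> {}}"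

definition imputation :: "'a set \<Rightarrow> ('a \<Rightarrow> 'a \<Rightarrow> bool) \<Rightarrow> ('a \<Rightarrow> rat) \<Rightarrow> ('a set \<Rightarrow> rat) \<Rightarrow> bool" where
  "imputation V E w y \<longleftrightarrow> (\<forall>Q\<in>maximal_cliques V E. y Q \<ge> 0)
      \<and> sum y (maximal_cliques V E) = cost E w V"

definition core_imputation :: "'a set \<Rightarrow> ('a \<Rightarrow> 'a \<Rightarrow> bool) \<Rightarrow> ('a \<Rightarrow> rat) \<Rightarrow> ('a set \<Rightarrow> rat) \<Rightarrow> bool" where
  "core_imputation V E w y \<longleftrightarrow> imputation V E w y
      \<and> (\<forall>S\<subseteq>V. money V E y S \<ge> cost E w S)"

definition lp_feasible :: "'a set \<Rightarrow> ('a \<Rightarrow> 'a \<Rightarrow> bool) \<Rightarrow> ('a \<Rightarrow> rat) \<Rightarrow> ('a set \<Rightarrow> rat) \<Rightarrow> bool" where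
  "lp_feasible V E w y \<longleftrightarrow> (\<forall>Q\<in>maximal_cliques V E. y Q \<ge> 0)
      \<and> (\<forall>v\<in>V. sum y {Q \<in> maximal_cliques V E. v \<in> Q} \<ge> w v)"

definition lp_optimal :: "'a set \<Rightarrow> ('a \<Rightarrow> 'a \<Rightarrow> bool) \<Rightarrow> ('a \<Rightarrow> rat) \<Rightarrow> ('a set \<Rightarrow> rat) \<Rightarrow> bool" where
  "lp_optimal V E w y \<longleftrightarrow> lp_feasible V E w y
      \<and> (\<forall>y'. lp_feasible V E w y' \<longrightarrow> sum y (maximal_cliques V E) \<le> sum y' (maximal_cliques V E))"

end

theory Submission
  imports Defs
begin


definition col :: "'b set \<Rightarrow> ('b \<Rightarrow> 'b \<Rightarrow> bool) \<Rightarrow> nat \<Rightarrow> bool" where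
  "col W F k \<longleftrightarrow> (\<exists>c::'b \<Rightarrow> nat. (\<forall>v\<in>W. c v < k) \<and> (\<forall>u\<in>W. \<forall>v\<in>W. F u v \<longrightarrow> c u \<noteq> c v))"

definition perf :: "'b set \<Rightarrow> ('b \<Rightarrow> 'b \<Rightarrow> bool) \<Rightarrow> bool" where
  "perf W F \<longleftrightarrow> (\<forall>S\<subseteq>W. \<forall>k. (\<forall>K. clique S F K \<longrightarrow> card K \<le> k) \<longrightarrow> col S F k)"

lemma dc:
  assumes "finite A" "finite B"
  shows "(\<Sum>a\<in>A. card {b\<in>B. R a b}) = (\<Sum>b\<in>B. card {a\<in>A. R a b})"
proof -
  have "(\<Sum>a\<in>A. card {b\<in>B. R a b}) = (\<Sum>a\<in>A. \<Sum>b\<in>B. if R a b then 1 else 0)"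
    using assms by (simp add: sum.If_cases Int_def)
  also have "\<dots> = (\<Sum>b\<in>B. \<Sum>a\<in>A. if R a b then 1 else 0)" by (rule sum.swap)
  also have "\<dots> = (\<Sum>b\<in>B. card {a\<in>A. R a b})"
    using assms by (simp add: sum.If_cases Int_def)
  finally show ?thesis .
qed

lemma stable_fin: "finite S \<Longrightarrow> finite {sum w I | I. stable_set S E I}"
proof -
  assume "finite S"
  have "{sum w I | I. stable_set S E I} = sum w ` {I. stable_set S E I}" by auto
  moreover have "{I. stable_set S E I} \<subseteq> Pow S" by (auto simp: stable_set_def)
  ultimately show ?thesis using \<open>finite S\<close> by (metis finite_Pow_iff finite_imageI finite_subset)
qed

lemma cost_ge: "finite S \<Longrightarrow> stable_set S E I \<Longrightarrow> sum w I \<le> cost E w S"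
  unfolding cost_def using stable_fin by (intro Max_ge) auto

lemma cost_attained: "finite S \<Longrightarrow> \<exists>I. stable_set S E I \<and> cost E w S = sum w I"
proof -
  assume f: "finite S"
  have "stable_set S E {}" by (simp add: stable_set_def)
  then have "{sum w I | I. stable_set S E I} \<noteq> {}" by auto
  from Max_in[OF stable_fin[OF f] this] show ?thesis unfolding cost_def by auto
qed

lemma max_clique_fin: "finite V \<Longrightarrow> finite (maximal_cliques V E)"
  by (rule finite_subset[of _ "Pow V"]) (auto simp: maximal_cliques_def clique_def)

lemma weak:
  assumes fin: "finite V"
    and nn: "\<forall>Q\<in>maximal_cliques V E. y Q \<ge> 0"
    and cov: "\<forall>v\<in>V. sum y {Q \<in> maximal_cliques V E. v \<in> Q} \<ge> w v"
    and S: "S \<subseteq> V" and I: "stable_set S E I"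
  shows "sum w I \<le> money V E y S"
proof -
  let ?M = "maximal_cliques V E"
  have IV: "I \<subseteq> V" using I S by (auto simp: stable_set_def)
  have fI: "finite I" using IV fin finite_subset by auto
  have fM: "finite ?M" using max_clique_fin fin .
  have "sum w I \<le> (\<Sum>v\<in>I. sum y {Q \<in> ?M. v \<in> Q})"
    using cov IV by (intro sum_mono) auto
  also have "\<dots> = sum y (\<Union>v\<in>I. {Q \<in> ?M. v \<in> Q})"
  proof -
    define A where "A = (\<lambda>v. {Q \<in> ?M. v \<in> Q})"
    have d: "\<forall>i\<in>I. \<forall>j\<in>I. i \<noteq> j \<longrightarrow> A i \<inter> A j = {}"
    proof (intro ballI impI)
      fix i j assume ij: "i \<in> I" "j \<in> I" "i \<noteq> j"
      show "A i \<inter> A j = {}"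
      proof (rule ccontr)
        assume "A i \<inter> A j \<noteq> {}"
        then obtain Q where "Q \<in> ?M" "i \<in> Q" "j \<in> Q" unfolding A_def by blast
        then have "E i j" using ij unfolding maximal_cliques_def clique_def by blast
        moreover have "\<not> E i j" using I ij unfolding stable_set_def by blast
        ultimately show False by blast
      qed
    qed
    have f: "\<forall>i\<in>I. finite (A i)" using fM unfolding A_def by auto
    have "sum y (\<Union>(A ` I)) = (\<Sum>v\<in>I. sum y (A v))"
      using sum.UNION_disjoint[OF fI f d] .
    then show ?thesis unfolding A_def by simp
  qed
  also have "\<dots> \<le> sum y {Q \<in> ?M. Q \<inter> S \<noteq> {}}"
  proof (rule sum_mono2)
    show "finite {Q \<in> ?M. Q \<inter> S \<noteq> {}}" using fM by auto
    show "(\<Union>v\<in>I. {Q \<in> ?M. v \<in> Q}) \<subseteq> {Q \<in> ?M. Q \<inter> S \<noteq> {}}"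
      using I by (auto simp: stable_set_def)
    show "\<And>b. b \<in> {Q \<in> ?M. Q \<inter> S \<noteq> {}} - (\<Union>v\<in>I. {Q \<in> ?M. v \<in> Q}) \<Longrightarrow> 0 \<le> y b"
      using nn by auto
  qed
  finally show ?thesis unfolding money_def .
qed

lemma perfect_perf:
  assumes g: "graph V E" and p: "perfect V E"
  shows "perf V E"
  unfolding perf_def
proof (intro allI impI)
  fix S k assume S: "S \<subseteq> V" and cl: "\<forall>K. clique S E K \<longrightarrow> card K \<le> k"
  have fS: "finite S" using g S finite_subset by (auto simp: graph_def)
  have irr: "\<forall>v\<in>S. \<not> E v v" using g S by (auto simp: graph_def)
  have "finite {card Q | Q. clique S E Q}"
  proof -
    have "{card Q | Q. clique S E Q} \<subseteq> card ` Pow S" by (auto simp: clique_def)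
    then show ?thesis using fS finite_subset by blast
  qed
  moreover have "clique S E {}" by (simp add: clique_def)
  ultimately have "clique_number S E \<le> k" unfolding clique_number_def
    using cl by (subst Max_le_iff) auto
  then have chi: "chromatic_number S E \<le> k" using p S by (simp add: perfect_def)
  obtain f where f: "bij_betw f S {0..<card S}" using ex_bij_betw_finite_nat[OF fS] by blast
  have ex: "\<exists>k c. (\<forall>v\<in>S. c v < k) \<and> (\<forall>u\<in>S. \<forall>v\<in>S. E u v \<longrightarrow> c u \<noteq> (c v::nat))"
  proof (intro exI conjI)
    show "\<forall>v\<in>S. f v < card S" using f by (auto simp: bij_betw_def)
    show "\<forall>u\<in>S. \<forall>v\<in>S. E u v \<longrightarrow> f u \<noteq> f v" using f irr by (auto simp: bij_betw_def inj_on_def)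
  qed
  have "\<exists>c. (\<forall>v\<in>S. c v < chromatic_number S E) \<and> (\<forall>u\<in>S. \<forall>v\<in>S. E u v \<longrightarrow> c u \<noteq> (c v::nat))"
    unfolding chromatic_number_def using ex by (rule LeastI_ex)
  then obtain c where c: "\<forall>v\<in>S. c v < chromatic_number S E" "\<forall>u\<in>S. \<forall>v\<in>S. E u v \<longrightarrow> c u \<noteq> (c v::nat)" by blast
  have "\<forall>v\<in>S. c v < k" using c(1) chi order_less_le_trans by blast
  then show "col S E k" unfolding col_def using c(2) by blast
qed



lemma rep:
  fixes E :: "'a \<Rightarrow> 'a \<Rightarrow> bool" and \<pi> :: "'b \<Rightarrow> 'a" and F :: "'b \<Rightarrow> 'b \<Rightarrow> bool"
  assumes P: "perf V E"
    and Fdef: "\<And>x y. F x y \<longleftrightarrow> x \<noteq> y \<and> (\<pi> x = \<pi> y \<or> E (\<pi> x) (\<pi> y))"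
  shows "finite W \<Longrightarrow> \<pi> ` W \<subseteq> V \<Longrightarrow> (\<And>K. clique W F K \<Longrightarrow> card K \<le> k) \<Longrightarrow> col W F k"
proof (induction "card W" arbitrary: W k rule: less_induct)
  case less
  note IH = less.hyps
  show ?case
  proof (cases "inj_on \<pi> W")
    case True
    have "col (\<pi> ` W) E k"
    proof -
      have "card K \<le> k" if K: "clique (\<pi> ` W) E K" for K
      proof -
        let ?C = "inv_into W \<pi> ` K"
        have KW: "K \<subseteq> \<pi> ` W" using K by (simp add: clique_def)
        have "inj_on (inv_into W \<pi>) K" using KW by (simp add: inj_on_inv_into)
        then have cC: "card ?C = card K" by (rule card_image)
        have "clique W F ?C"
          unfolding clique_def
        proof (intro conjI ballI impI)
          show "?C \<subseteq> W" using KW by (auto intro: inv_into_into)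
          fix a b assume a: "a \<in> ?C" and b: "b \<in> ?C" and ab: "a \<noteq> b"
          from a obtain p where p: "p \<in> K" "a = inv_into W \<pi> p" by blast
          from b obtain q where q: "q \<in> K" "b = inv_into W \<pi> q" by blast
          have pa: "\<pi> a = p" using p KW by (simp add: f_inv_into_f subset_eq)
          have qb: "\<pi> b = q" using q KW by (simp add: f_inv_into_f subset_eq)
          have "p \<noteq> q" using p q ab by blast
          then have "E p q" using K p q by (simp add: clique_def)
          then show "F a b" using Fdef ab pa qb by simp
        qed
        then have "card ?C \<le> k" using less.prems(3) by blast
        then show ?thesis using cC by simp
      qed
      then show ?thesis using P less.prems(2) unfolding perf_def by blast
    qed
    then obtain c where c: "\<forall>v\<in>\<pi> ` W. c v < k" "\<forall>u\<in>\<pi> ` W. \<forall>v\<in>\<pi> ` W. E u v \<longrightarrow> c u \<noteq> c v"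
      unfolding col_def by blast
    show ?thesis unfolding col_def
    proof (intro exI[of _ "c \<circ> \<pi>"] conjI ballI impI)
      fix v assume "v \<in> W" then show "(c \<circ> \<pi>) v < k" using c(1) by simp
    next
      fix u v assume uv: "u \<in> W" "v \<in> W" "F u v"
      then have "\<pi> u \<noteq> \<pi> v" using True Fdef by (meson inj_onD)
      then have "E (\<pi> u) (\<pi> v)" using uv Fdef by blast
      then show "(c \<circ> \<pi>) u \<noteq> (c \<circ> \<pi>) v" using c(2) uv by simp
    qed
  next
    case False
    then obtain x x' where xx: "x \<in> W" "x' \<in> W" "x \<noteq> x'" "\<pi> x = \<pi> x'"
      unfolding inj_on_def by blast
    define W0 where "W0 = W - {x'}"
    have fW: "finite W" by fact
    have W0W: "W0 \<subseteq> W" and fW0: "finite W0"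
      using xx fW by (auto simp: W0_def)
    have cW0: "card W0 < card W" unfolding W0_def using card_Diff1_less[OF fW xx(2)] .
    have x0: "x \<in> W0" "x' \<notin> W0" using xx by (auto simp: W0_def)
    have "clique W F {x}" using xx by (simp add: clique_def)
    then have k1: "1 \<le> k" using less.prems(3) by fastforce
    have clW0: "clique W F K" if "clique W0 F K" for K
      using that W0W by (auto simp: clique_def)
    show ?thesis
    proof (cases "\<exists>K. clique W0 F K \<and> card K = k")
      case False
      have "col W0 F (k - 1)"
      proof (rule IH[OF cW0 fW0])
        show "\<pi> ` W0 \<subseteq> V" using W0W less.prems(2) by blast
        fix K assume K: "clique W0 F K"
        then have "card K \<le> k" using clW0 less.prems(3) by blast
        moreover have "card K \<noteq> k" using False K by blast
        ultimately show "card K \<le> k - 1" by simp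
      qed
      then obtain c where c: "\<forall>v\<in>W0. c v < k - 1" "\<forall>u\<in>W0. \<forall>v\<in>W0. F u v \<longrightarrow> c u \<noteq> c v"
        unfolding col_def by blast
      show ?thesis unfolding col_def
      proof (intro exI[of _ "c(x' := k - 1)"] conjI ballI impI)
        fix v assume "v \<in> W" then show "(c(x' := k - 1)) v < k"
          using c(1) k1 by (cases "v = x'") (force simp: W0_def)+
      next
        fix u v assume uv: "u \<in> W" "v \<in> W" "F u v"
        then have "u \<noteq> v" using Fdef by blast
        then show "(c(x' := k - 1)) u \<noteq> (c(x' := k - 1)) v"
          using uv c by (cases "u = x'"; cases "v = x'") (force simp: W0_def)+
      qed
    next
      case True
      have cl0: "card K \<le> k" if "clique W0 F K" for K
        using that clW0 less.prems(3) by blast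
      have "col W0 F k"
        by (rule IH[OF cW0 fW0]) (use W0W less.prems(2) cl0 in auto)
      then obtain c where c: "\<forall>v\<in>W0. c v < k" "\<forall>u\<in>W0. \<forall>v\<in>W0. F u v \<longrightarrow> c u \<noteq> c v"
        unfolding col_def by blast
      define A where "A = {u \<in> W0. c u = c x}"
      define W1 where "W1 = W0 - (A - {x})"
      have noxk: "card K < k" if K: "clique W0 F K" and xK: "x \<in> K" for K
      proof (rule ccontr)
        assume "\<not> card K < k"
        then have ck: "card K = k" using cl0 K by force
        have fK: "finite K" using K fW0 by (auto simp: clique_def intro: finite_subset)
        have x'K: "x' \<notin> K" using K x0 by (auto simp: clique_def)
        have "clique W F (insert x' K)"
          unfolding clique_def
        proof (intro conjI ballI impI)
          show "insert x' K \<subseteq> W" using K W0W xx by (auto simp: clique_def)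
          fix a b assume a: "a \<in> insert x' K" and b: "b \<in> insert x' K" and ab: "a \<noteq> b"
          have xF: "F x' u \<and> F u x'" if u: "u \<in> K" for u
          proof (cases "u = x")
            case True then show ?thesis using Fdef xx by auto
          next
            case False
            then have "F x u \<and> F u x" using K xK u by (simp add: clique_def)
            then show ?thesis using Fdef xx u x'K by auto
          qed
          show "F a b"
          proof (cases "a = x'")
            case True
            then have "b \<in> K" using b ab by auto
            then show ?thesis using xF True by blast
          next
            case False
            then have aK: "a \<in> K" using a by auto
            show ?thesis
            proof (cases "b = x'")
              case True then show ?thesis using xF aK by blast
            next
              case False
              then have "b \<in> K" using b by auto
              then show ?thesis using aK ab K by (simp add: clique_def)
            qed
          qed
        qed
        then have "card (insert x' K) \<le> k" using less.prems(3) by blast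
        then show False using fK x'K ck by simp
      qed
      have W1W0: "W1 \<subseteq> W0" by (auto simp: W1_def)
      have cW1: "card W1 < card W" using W1W0 cW0 fW0 by (meson card_mono le_less_trans)
      have fW1: "finite W1" using W1W0 fW0 finite_subset by blast
      have cx: "c x < k" using c(1) x0 by blast
      have cl1: "card K \<le> k - 1" if K: "clique W1 F K" for K
      proof (rule ccontr)
        assume "\<not> card K \<le> k - 1"
        moreover have K0: "clique W0 F K" using K W1W0 by (auto simp: clique_def)
        ultimately have ck: "card K = k" using cl0 by force
        have xK: "x \<notin> K" using noxk[OF K0] ck by auto
        have KW1: "K \<subseteq> W1" using K by (simp add: clique_def)
        have cK: "c u \<noteq> c x" if "u \<in> K" for u
          using that KW1 xK by (auto simp: W1_def A_def)
        have inj: "inj_on c K"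
        proof (rule inj_onI)
          fix a b assume "a \<in> K" "b \<in> K" "c a = c b"
          then show "a = b" using K0 c(2) unfolding clique_def by blast
        qed
        have "c ` K \<subseteq> {..<k} - {c x}" using cK c(1) KW1 W1W0 by auto
        then have "card (c ` K) \<le> card ({..<k} - {c x})" by (intro card_mono) auto
        also have "\<dots> = k - 1" using cx by simp
        finally show False using card_image[OF inj] ck k1 by simp
      qed
      have "col W1 F (k - 1)"
        by (rule IH[OF cW1 fW1]) (use W1W0 W0W less.prems(2) cl1 in auto)
      then obtain c1 where c1: "\<forall>v\<in>W1. c1 v < k - 1" "\<forall>u\<in>W1. \<forall>v\<in>W1. F u v \<longrightarrow> c1 u \<noteq> c1 v"
        unfolding col_def by blast
      define c2 where "c2 = (\<lambda>v. if v \<in> W1 then c1 v else k - 1)"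
      have out: "v = x' \<or> (v \<in> A \<and> v \<noteq> x)" if "v \<in> W" "v \<notin> W1" for v
        using that by (auto simp: W1_def W0_def)
      show ?thesis unfolding col_def
      proof (intro exI[of _ c2] conjI ballI impI)
        fix v assume "v \<in> W" then show "c2 v < k" using c1(1) k1 by (auto simp: c2_def)
      next
        fix u v assume uv: "u \<in> W" "v \<in> W" "F u v"
        show "c2 u \<noteq> c2 v"
        proof (cases "u \<in> W1")
          case uW1: True
          show ?thesis
          proof (cases "v \<in> W1")
            case True then show ?thesis using uW1 c1 uv by (simp add: c2_def)
          next
            case False then show ?thesis using uW1 c1(1) by (force simp: c2_def)
          qed
        next
          case uW1: False
          show ?thesis
          proof (cases "v \<in> W1")
            case True then show ?thesis using uW1 c1(1) by (force simp: c2_def)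
          next
            case vW1: False
            have ou: "u = x' \<or> (u \<in> A \<and> u \<noteq> x)" using out uv uW1 by blast
            have ov: "v = x' \<or> (v \<in> A \<and> v \<noteq> x)" using out uv vW1 by blast
            have "False"
            proof -
              { assume "u = x'" "v = x'" then have False using uv Fdef by blast }
              moreover
              { assume u: "u = x'" and v: "v \<in> A" "v \<noteq> x"
                then have "F x v" using uv Fdef xx by auto
                then have "c x \<noteq> c v" using c(2) x0 v unfolding A_def by blast
                then have False using v by (simp add: A_def) }
              moreover
              { assume v: "v = x'" and u: "u \<in> A" "u \<noteq> x"
                then have "F u x" using uv Fdef xx by auto
                then have "c u \<noteq> c x" using c(2) x0 u unfolding A_def by blast
                then have False using u by (simp add: A_def) }
              moreover
              { assume u: "u \<in> A" and v: "v \<in> A"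
                then have "c u \<noteq> c v" using c(2) uv unfolding A_def by blast
                then have False using u v by (simp add: A_def) }
              ultimately show False using ou ov by blast
            qed
            then show ?thesis by blast
          qed
        qed
      qed
    qed
  qed
qed



lemma alpha_fin: "finite S \<Longrightarrow> finite {card I | I. stable_set S E I} \<and> {card I | I. stable_set S E I} \<noteq> {}"
proof -
  assume f: "finite S"
  have "{card I | I. stable_set S E I} \<subseteq> card ` Pow S" by (auto simp: stable_set_def)
  moreover have "stable_set S E {}" by (simp add: stable_set_def)
  ultimately show ?thesis using f finite_subset by blast
qed

lemma alpha_ge: "finite S \<Longrightarrow> stable_set S E I \<Longrightarrow> card I \<le> Max {card I | I. stable_set S E I}"
  using alpha_fin by (intro Max_ge) auto

lemma alpha_in: "finite S \<Longrightarrow> \<exists>I. stable_set S E I \<and> card I = Max {card I | I. stable_set S E I}"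
proof -
  assume f: "finite S"
  from Max_in[of "{card I | I. stable_set S E I}"] alpha_fin[OF f, of E] show ?thesis by auto
qed

lemma perf_sub: "perf V E \<Longrightarrow> S \<subseteq> V \<Longrightarrow> perf S E"
  unfolding perf_def by blast

lemma lov:
  fixes E :: "'a \<Rightarrow> 'a \<Rightarrow> bool"
  assumes fin: "finite V" and irr: "\<forall>v\<in>V. \<not> E v v" and P: "perf V E"
  shows "S \<subseteq> V \<Longrightarrow> \<exists>\<C>. finite \<C> \<and> card \<C> \<le> Max {card I | I. stable_set S E I}
            \<and> (\<forall>C\<in>\<C>. clique S E C) \<and> S \<subseteq> \<Union>\<C>"
proof (induction "card S" arbitrary: S rule: less_induct)
  case less
  note IH = less.hyps
  define \<alpha> where "\<alpha> = Max {card I | I. stable_set S E I}"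
  have fS: "finite S" using less.prems fin finite_subset by blast
  have \<alpha>ge: "\<And>I. stable_set S E I \<Longrightarrow> card I \<le> \<alpha>" unfolding \<alpha>_def using alpha_ge[OF fS] by blast
  obtain I0 where I0: "stable_set S E I0" "card I0 = \<alpha>" unfolding \<alpha>_def using alpha_in[OF fS] by blast
  show ?case
  proof (cases "S = {}")
    case True
    then show ?thesis by (intro exI[of _ "{}"]) auto
  next
    case False
    then obtain v0 where v0: "v0 \<in> S" by blast
    have "stable_set S E {v0}" using v0 irr less.prems by (auto simp: stable_set_def)
    then have \<alpha>1: "1 \<le> \<alpha>" using \<alpha>ge by fastforce
    have key: "\<exists>K. clique S E K \<and> (\<forall>I. stable_set S E I \<and> card I = \<alpha> \<longrightarrow> I \<inter> K \<noteq> {})"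
    proof (rule ccontr)
      assume nk: "\<not> ?thesis"
      define \<K> where "\<K> = {K. clique S E K}"
      have f\<K>: "finite \<K>"
        by (rule finite_subset[of _ "Pow S"]) (use fS in \<open>auto simp: \<K>_def clique_def\<close>)
      have e\<K>: "{} \<in> \<K>" by (simp add: \<K>_def clique_def)
      have "\<forall>K\<in>\<K>. \<exists>I. stable_set S E I \<and> card I = \<alpha> \<and> I \<inter> K = {}" using nk \<K>_def by blast
      then obtain f where f: "\<forall>K\<in>\<K>. stable_set S E (f K) \<and> card (f K) = \<alpha> \<and> f K \<inter> K = {}"
        by metis
      define N where "N = card \<K>"
      have N1: "1 \<le> N" using e\<K> f\<K> by (simp add: N_def Suc_le_eq card_gt_0_iff) blast
      define t where "t = (\<lambda>v. card {K\<in>\<K>. v \<in> f K})"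
      define W where "W = (SIGMA v:S. {..<t v})"
      define F where "F = (\<lambda>x y::'a\<times>nat. x \<noteq> y \<and> (fst x = fst y \<or> E (fst x) (fst y)))"
      have Fdef: "\<And>x y. F x y \<longleftrightarrow> x \<noteq> y \<and> (fst x = fst y \<or> E (fst x) (fst y))" by (simp add: F_def)
      have fW: "finite W" using fS by (simp add: W_def)
      have PS: "perf S E" using perf_sub[OF P less.prems] .
      have clW: "card C \<le> N - 1" if C: "clique W F C" for C
      proof -
        define K' where "K' = fst ` C"
        have CW: "C \<subseteq> W" using C by (simp add: clique_def)
        have K'S: "K' \<subseteq> S" using CW by (auto simp: K'_def W_def)
        have fK': "finite K'" using K'S fS finite_subset by blast
        have K'cl: "clique S E K'"
          unfolding clique_def
        proof (intro conjI ballI impI)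
          show "K' \<subseteq> S" by fact
          fix a b assume a: "a \<in> K'" and b: "b \<in> K'" and ab: "a \<noteq> b"
          obtain x where x: "x \<in> C" "a = fst x" using a K'_def by blast
          obtain y where y: "y \<in> C" "b = fst y" using b K'_def by blast
          have "x \<noteq> y" using x y ab by blast
          then have "F x y" using C x y by (simp add: clique_def)
          then show "E a b" using Fdef x y ab by blast
        qed
        then have K'K: "K' \<in> \<K>" by (simp add: \<K>_def)
        have "C \<subseteq> (SIGMA a:K'. {..<t a})" using CW by (force simp: W_def K'_def)
        then have "card C \<le> card (SIGMA a:K'. {..<t a})" by (rule card_mono[rotated]) (simp add: fK')
        also have "\<dots> = (\<Sum>a\<in>K'. t a)" using fK' by simp
        also have "\<dots> = (\<Sum>K\<in>\<K>. card {a\<in>K'. a \<in> f K})"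
          unfolding t_def using dc[OF fK' f\<K>, of "\<lambda>a K. a \<in> f K"] by simp
        also have "\<dots> \<le> (\<Sum>K\<in>\<K>. if K = K' then 0 else 1)"
        proof (rule sum_mono)
          fix K assume KK: "K \<in> \<K>"
          show "card {a\<in>K'. a \<in> f K} \<le> (if K = K' then 0 else 1)"
          proof (cases "K = K'")
            case True
            then have "{a\<in>K'. a \<in> f K} = {}" using f K'K by blast
            then have "card {a\<in>K'. a \<in> f K} = 0" by (metis card.empty)
            then show ?thesis using True by simp
          next
            case False
            have "card {a\<in>K'. a \<in> f K} \<le> Suc 0"
            proof (subst card_le_Suc0_iff_eq)
              show "finite {a\<in>K'. a \<in> f K}" using fK' by simp
              show "\<forall>a1\<in>{a\<in>K'. a \<in> f K}. \<forall>a2\<in>{a\<in>K'. a \<in> f K}. a1 = a2"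
              proof (intro ballI)
                fix a1 a2 assume a1: "a1 \<in> {a\<in>K'. a \<in> f K}" and a2: "a2 \<in> {a\<in>K'. a \<in> f K}"
                show "a1 = a2"
                proof (rule ccontr)
                  assume "a1 \<noteq> a2"
                  then have "E a1 a2" using K'cl a1 a2 by (simp add: clique_def)
                  moreover have "\<not> E a1 a2" using f KK a1 a2 by (simp add: stable_set_def)
                  ultimately show False by blast
                qed
              qed
            qed
            then show ?thesis using False by simp
          qed
        qed
        also have "\<dots> = card (\<K> - {K'})"
          using f\<K> by (simp add: sum.If_cases Diff_eq)
        also have "\<dots> = N - 1" using K'K f\<K> by (simp add: N_def)
        finally show ?thesis .
      qed
      have "fst ` W \<subseteq> S" by (auto simp: W_def)
      then have "col W F (N - 1)" using rep[OF PS Fdef fW _ clW] by blast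
      then obtain c where c: "\<forall>v\<in>W. c v < N - 1" "\<forall>u\<in>W. \<forall>v\<in>W. F u v \<longrightarrow> c u \<noteq> c v"
        unfolding col_def by blast
      have cls: "card {x\<in>W. c x = j} \<le> \<alpha>" for j
      proof -
        let ?Cl = "{x\<in>W. c x = j}"
        have inj: "inj_on fst ?Cl"
        proof (rule inj_onI)
          fix x y assume x: "x \<in> ?Cl" and y: "y \<in> ?Cl" and e: "fst x = fst y"
          show "x = y"
          proof (rule ccontr)
            assume "x \<noteq> y"
            then have "F x y" using Fdef e by blast
            moreover have "x \<in> W" "y \<in> W" "c x = c y" using x y by auto
            ultimately show False using c(2) by blast
          qed
        qed
        have "stable_set S E (fst ` ?Cl)"
          unfolding stable_set_def
        proof (intro conjI ballI)
          show "fst ` ?Cl \<subseteq> S" by (auto simp: W_def)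
          fix a b assume a: "a \<in> fst ` ?Cl" and b: "b \<in> fst ` ?Cl"
          obtain x where x: "x \<in> ?Cl" "a = fst x" using a by blast
          obtain y where y: "y \<in> ?Cl" "b = fst y" using b by blast
          show "\<not> E a b"
          proof
            assume Eab: "E a b"
            show False
            proof (cases "x = y")
              case True
              then have "a = b" using x y by simp
              moreover have "a \<in> V" using x less.prems by (auto simp: W_def)
              ultimately show False using irr Eab by blast
            next
              case False
              then have "F x y" using Fdef Eab x y by blast
              moreover have "x \<in> W" "y \<in> W" "c x = c y" using x y by auto
            ultimately show False using c(2) by blast
            qed
          qed
        qed
        then have "card (fst ` ?Cl) \<le> \<alpha>" by (rule \<alpha>ge)
        then show ?thesis using card_image[OF inj] by simp
      qed
      have Wun: "W = (\<Union>j\<in>{..<N-1}. {x\<in>W. c x = j})" using c(1) by auto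
      have "card W = (\<Sum>j\<in>{..<N-1}. card {x\<in>W. c x = j})"
        by (subst Wun, rule card_UN_disjoint) (use fW in auto)
      also have "\<dots> \<le> (N - 1) * \<alpha>"
        using sum_bounded_above[of "{..<N-1}" "\<lambda>j. card {x\<in>W. c x = j}" \<alpha>] cls by simp
      finally have up: "card W \<le> (N - 1) * \<alpha>" .
      have "card W = (\<Sum>v\<in>S. t v)" using fS by (simp add: W_def)
      also have "\<dots> = (\<Sum>K\<in>\<K>. card {v\<in>S. v \<in> f K})"
        unfolding t_def using dc[OF fS f\<K>, of "\<lambda>a K. a \<in> f K"] by simp
      also have "\<dots> = (\<Sum>K\<in>\<K>. \<alpha>)"
      proof (rule sum.cong)
        fix K assume "K \<in> \<K>"
        then have "{v\<in>S. v \<in> f K} = f K" "card (f K) = \<alpha>" using f by (auto simp: stable_set_def)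
        then show "card {v\<in>S. v \<in> f K} = \<alpha>" by simp
      qed simp
      also have "\<dots> = N * \<alpha>" by (simp add: N_def)
      finally have "N * \<alpha> \<le> (N - 1) * \<alpha>" using up by simp
      then show False using N1 \<alpha>1 by (cases N) auto
    qed
    then obtain K where K: "clique S E K" "\<And>I. stable_set S E I \<Longrightarrow> card I = \<alpha> \<Longrightarrow> I \<inter> K \<noteq> {}"
      by blast
    define S' where "S' = S - K"
    have KS: "K \<subseteq> S" using K by (simp add: clique_def)
    have "K \<noteq> {}" using K(2)[OF I0] by blast
    then have "S' \<subset> S" using KS by (auto simp: S'_def)
    then have cS': "card S' < card S" using fS by (rule psubset_card_mono[rotated])
    have S'V: "S' \<subseteq> V" using less.prems by (auto simp: S'_def)
    obtain \<C>' where C': "finite \<C>'" "card \<C>' \<le> Max {card I | I. stable_set S' E I}"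
        "\<forall>C\<in>\<C>'. clique S' E C" "S' \<subseteq> \<Union>\<C>'"
      using IH[OF cS' S'V] by blast
    have fS': "finite S'" using fS by (simp add: S'_def)
    have "Max {card I | I. stable_set S' E I} \<le> \<alpha> - 1"
    proof (subst Max_le_iff)
      show "finite {card I | I. stable_set S' E I}" using alpha_fin[OF fS'] by blast
      show "{card I | I. stable_set S' E I} \<noteq> {}" using alpha_fin[OF fS'] by blast
      show "\<forall>a\<in>{card I | I. stable_set S' E I}. a \<le> \<alpha> - 1"
      proof
        fix a assume "a \<in> {card I | I. stable_set S' E I}"
        then obtain I where I: "stable_set S' E I" "a = card I" by blast
        then have IS: "stable_set S E I" by (auto simp: stable_set_def S'_def)
        have "card I \<noteq> \<alpha>"
        proof
          assume "card I = \<alpha>"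
          then have "I \<inter> K \<noteq> {}" using K(2) IS by blast
          then show False using I by (auto simp: stable_set_def S'_def)
        qed
        then show "a \<le> \<alpha> - 1" using \<alpha>ge[OF IS] I by simp
      qed
    qed
    then have cC': "card \<C>' \<le> \<alpha> - 1" using C'(2) by linarith
    show ?thesis
    proof (intro exI[of _ "insert K \<C>'"] conjI ballI)
      show "finite (insert K \<C>')" using C'(1) by simp
      have "card (insert K \<C>') \<le> Suc (card \<C>')" using C'(1) by (simp add: card_insert_if)
      then show "card (insert K \<C>') \<le> Max {card I | I. stable_set S E I}"
        using cC' \<alpha>1 unfolding \<alpha>_def[symmetric] by linarith
      fix C assume "C \<in> insert K \<C>'"
      then show "clique S E C" using K(1) C'(3) by (auto simp: clique_def S'_def)
    next
      show "S \<subseteq> \<Union>(insert K \<C>')" using C'(4) by (auto simp: S'_def)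
    qed
  qed
qed



lemma denom:
  fixes w :: "'a \<Rightarrow> rat"
  shows "finite V \<Longrightarrow> \<exists>d::nat. d > 0 \<and> (\<forall>v\<in>V. \<exists>z::int. w v * of_nat d = of_int z)"
proof (induction V rule: finite_induct)
  case empty
  show ?case by (intro exI[of _ "1::nat"]) simp
next
  case (insert v F)
  then obtain d :: nat where d: "d > 0" "\<forall>u\<in>F. \<exists>z::int. w u * of_nat d = of_int z" by blast
  obtain p q where pq: "quotient_of (w v) = (p, q)" by (cases "quotient_of (w v)") auto
  have q0: "q > 0" using quotient_of_denom_pos[OF pq] .
  have wv: "w v = of_int p / of_int q" using quotient_of_div[OF pq] .
  have cast: "(of_nat (d * nat q) :: rat) = of_nat d * of_int q" using q0 by simp
  show ?case
  proof (intro exI[of _ "d * nat q"] conjI ballI)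
    show "d * nat q > 0" using d(1) q0 by simp
    fix u assume "u \<in> insert v F"
    then consider "u = v" | "u \<in> F" by blast
    then show "\<exists>z::int. w u * of_nat (d * nat q) = of_int z"
    proof cases
      case 1
      have "w u * of_nat (d * nat q) = of_int p / of_int q * (of_nat d * of_int q)"
        by (simp only: 1 wv cast)
      also have "\<dots> = of_int p * of_nat d" using q0 by (simp add: field_simps)
      also have "\<dots> = of_int (p * int d)" by simp
      finally have "w u * of_nat (d * nat q) = of_int (p * int d)" .
      then show ?thesis by blast
    next
      case 2
      then obtain z where z: "w u * of_nat d = of_int z" using d(2) by blast
      have "w u * of_nat (d * nat q) = (w u * of_nat d) * of_int q"
        using cast by (simp add: mult.assoc)
      also have "\<dots> = of_int (z * q)" using z by simp
      finally have "w u * of_nat (d * nat q) = of_int (z * q)" .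
      then show ?thesis by blast
    qed
  qed
qed

lemma extend_max:
  assumes "finite V" "clique V E K"
  shows "\<exists>Q\<in>maximal_cliques V E. K \<subseteq> Q"
proof -
  define A where "A = {Q. clique V E Q \<and> K \<subseteq> Q}"
  have "finite A"
    by (rule finite_subset[of _ "Pow V"]) (use assms(1) in \<open>auto simp: A_def clique_def\<close>)
  moreover have "A \<noteq> {}" using assms(2) by (auto simp: A_def)
  ultimately obtain m where m: "m \<in> A" "\<forall>b\<in>A. m \<le> b \<longrightarrow> m = b"
    using finite_has_maximal by blast
  have "m \<in> maximal_cliques V E"
    unfolding maximal_cliques_def
  proof (intro CollectI conjI allI impI)
    show "clique V E m" using m by (simp add: A_def)
    fix Q' assume "clique V E Q' \<and> m \<subseteq> Q'"
    then have "Q' \<in> A" "m \<subseteq> Q'" using m(1) by (auto simp: A_def)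
    then show "Q' = m" using m(2) by auto
  qed
  then show ?thesis using m(1) by (auto simp: A_def)
qed

lemma strong:
  fixes E :: "'a \<Rightarrow> 'a \<Rightarrow> bool" and w :: "'a \<Rightarrow> rat"
  assumes g: "graph V E" and p: "perfect V E" and w0: "\<forall>v\<in>V. w v \<ge> 0"
  shows "\<exists>y'. lp_feasible V E w y' \<and> sum y' (maximal_cliques V E) \<le> cost E w V"
proof -
  let ?M = "maximal_cliques V E"
  have fin: "finite V" using g by (simp add: graph_def)
  have irr: "\<forall>v\<in>V. \<not> E v v" using g by (simp add: graph_def)
  have P: "perf V E" using perfect_perf[OF g p] .
  have fM: "finite ?M" using max_clique_fin[OF fin] .
  obtain d :: nat where d: "d > 0" "\<forall>v\<in>V. \<exists>z::int. w v * of_nat d = of_int z"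
    using denom[OF fin, of w] by blast
  obtain zf where zf: "\<forall>v\<in>V. w v * of_nat d = of_int (zf v)" using d(2) by metis
  define m where "m = (\<lambda>v. nat (zf v))"
  have mv: "of_nat (m v) = w v * of_nat d" if "v \<in> V" for v
  proof -
    have "w v * of_nat d \<ge> 0" using w0 that by simp
    then have "zf v \<ge> 0" using zf that by (metis of_int_0_le_iff)
    then show ?thesis using zf that by (simp add: m_def)
  qed
  define W where "W = (SIGMA v:V. {..<m v})"
  define F0 where "F0 = (\<lambda>(x::'a\<times>nat) (y::'a\<times>nat). E (fst x) (fst y))"
  have fW: "finite W" using fin by (simp add: W_def)
  have irrW: "\<forall>x\<in>W. \<not> F0 x x"
  proof
    fix x assume "x \<in> W"
    then have "fst x \<in> V" by (cases x) (simp add: W_def)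
    then show "\<not> F0 x x" using irr by (simp add: F0_def)
  qed
  have PW: "perf W F0"
    unfolding perf_def
  proof (intro allI impI)
    fix S k assume SW: "S \<subseteq> W" and cl: "\<forall>K. clique S F0 K \<longrightarrow> card K \<le> k"
    define T where "T = fst ` S"
    have TV: "T \<subseteq> V" using SW by (auto simp: T_def W_def)
    have "card K \<le> k" if K: "clique T E K" for K
    proof -
      let ?C = "inv_into S fst ` K"
      have KT: "K \<subseteq> fst ` S" using K by (simp add: clique_def T_def)
      have "inj_on (inv_into S fst) K" using KT by (simp add: inj_on_inv_into)
      then have cC: "card ?C = card K" by (rule card_image)
      have "clique S F0 ?C"
        unfolding clique_def
      proof (intro conjI ballI impI)
        show "?C \<subseteq> S" using KT by (meson image_subsetI inv_into_into subset_eq)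
        fix a b assume a: "a \<in> ?C" and b: "b \<in> ?C" and ab: "a \<noteq> b"
        from a obtain p where p: "p \<in> K" "a = inv_into S fst p" by blast
        from b obtain q where q: "q \<in> K" "b = inv_into S fst q" by blast
        have pa: "fst a = p" using p KT by (simp add: f_inv_into_f subset_eq)
        have qb: "fst b = q" using q KT by (simp add: f_inv_into_f subset_eq)
        have "p \<noteq> q" using p q ab by blast
        then have "E p q" using K p q by (simp add: clique_def)
        then show "F0 a b" using pa qb by (simp add: F0_def)
      qed
      then have "card ?C \<le> k" using cl by blast
      then show ?thesis using cC by simp
    qed
    then have "col T E k" using P TV unfolding perf_def by blast
    then obtain c where c: "\<forall>v\<in>T. c v < k" "\<forall>u\<in>T. \<forall>v\<in>T. E u v \<longrightarrow> c u \<noteq> c v"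
      unfolding col_def by blast
    show "col S F0 k" unfolding col_def
    proof (intro exI[of _ "c \<circ> fst"] conjI ballI impI)
      fix v assume "v \<in> S" then show "(c \<circ> fst) v < k" using c(1) by (simp add: T_def)
    next
      fix u v assume uv: "u \<in> S" "v \<in> S" "F0 u v"
      then show "(c \<circ> fst) u \<noteq> (c \<circ> fst) v" using c(2) by (simp add: T_def F0_def)
    qed
  qed
  obtain \<C> where C: "finite \<C>" "card \<C> \<le> Max {card I | I. stable_set W F0 I}"
      "\<forall>C\<in>\<C>. clique W F0 C" "W \<subseteq> \<Union>\<C>"
    using lov[OF fW irrW PW, of W] by blast
  obtain I0 where I0: "stable_set W F0 I0" "card I0 = Max {card I | I. stable_set W F0 I}"
    using alpha_in[OF fW] by blast
  have cardC: "of_nat (card \<C>) \<le> cost E w V * of_nat d"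
  proof -
    define J where "J = fst ` I0"
    have I0W: "I0 \<subseteq> W" using I0 by (simp add: stable_set_def)
    have JV: "J \<subseteq> V" using I0W by (auto simp: J_def W_def)
    have fJ: "finite J" using JV fin finite_subset by blast
    have Js: "stable_set V E J"
      unfolding stable_set_def
    proof (intro conjI ballI)
      show "J \<subseteq> V" by fact
      fix a b assume "a \<in> J" "b \<in> J"
      then obtain x y where "x \<in> I0" "y \<in> I0" "a = fst x" "b = fst y" by (auto simp: J_def)
      then show "\<not> E a b" using I0 by (simp add: stable_set_def F0_def)
    qed
    have "I0 \<subseteq> (SIGMA a:J. {..<m a})" using I0W by (force simp: J_def W_def)
    then have "card I0 \<le> card (SIGMA a:J. {..<m a})" by (rule card_mono[rotated]) (simp add: fJ)
    also have "\<dots> = (\<Sum>a\<in>J. m a)" using fJ by simp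
    finally have "card \<C> \<le> (\<Sum>a\<in>J. m a)" using C(2) I0(2) by simp
    then have "(of_nat (card \<C>) :: rat) \<le> of_nat (\<Sum>a\<in>J. m a)" by (simp only: of_nat_le_iff)
    also have "\<dots> = (\<Sum>a\<in>J. w a * of_nat d)" using mv JV by (simp add: subset_eq)
    also have "\<dots> = sum w J * of_nat d" by (simp add: sum_distrib_right)
    also have "\<dots> \<le> cost E w V * of_nat d"
      using cost_ge[OF fin Js, of w] by (intro mult_right_mono) auto
    finally show ?thesis .
  qed
  have "\<forall>C\<in>\<C>. \<exists>Q\<in>?M. fst ` C \<subseteq> Q"
  proof
    fix C assume CC: "C \<in> \<C>"
    have Ccl: "clique W F0 C" using C(3) CC by blast
    have "clique V E (fst ` C)"
      unfolding clique_def
    proof (intro conjI ballI impI)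
      show "fst ` C \<subseteq> V" using Ccl by (force simp: clique_def W_def)
      fix a b assume "a \<in> fst ` C" "b \<in> fst ` C" "a \<noteq> b"
      then obtain x y where "x \<in> C" "y \<in> C" "a = fst x" "b = fst y" "x \<noteq> y" by auto
      then show "E a b" using Ccl by (simp add: clique_def F0_def)
    qed
    then show "\<exists>Q\<in>?M. fst ` C \<subseteq> Q" using extend_max[OF fin] by blast
  qed
  then obtain g where g: "\<forall>C\<in>\<C>. g C \<in> ?M \<and> fst ` C \<subseteq> g C" by metis
  define y' where "y' = (\<lambda>Q. (of_nat (card {C\<in>\<C>. g C = Q}) :: rat) / of_nat d)"
  have sumy: "sum y' ?M = of_nat (card \<C>) / of_nat d"
  proof -
    have "(\<Sum>Q\<in>?M. card {C\<in>\<C>. g C = Q}) = (\<Sum>C\<in>\<C>. card {Q\<in>?M. g C = Q})"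
      using dc[OF fM C(1), of "\<lambda>Q C. g C = Q"] .
    also have "\<dots> = (\<Sum>C\<in>\<C>. 1)"
    proof (rule sum.cong)
      fix C assume "C \<in> \<C>"
      then have "{Q\<in>?M. g C = Q} = {g C}" using g by auto
      then show "card {Q\<in>?M. g C = Q} = 1" by simp
    qed simp
    finally have e1: "(\<Sum>Q\<in>?M. card {C\<in>\<C>. g C = Q}) = card \<C>" by simp
    have "(\<Sum>Q\<in>?M. (of_nat (card {C\<in>\<C>. g C = Q}) :: rat)) = of_nat (\<Sum>Q\<in>?M. card {C\<in>\<C>. g C = Q})"
      by (rule of_nat_sum[symmetric])
    also have "\<dots> = of_nat (card \<C>)" by (simp only: e1)
    finally have "(\<Sum>Q\<in>?M. (of_nat (card {C\<in>\<C>. g C = Q}) :: rat)) = of_nat (card \<C>)" .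
    then show ?thesis unfolding y'_def by (simp add: sum_divide_distrib[symmetric])
  qed
  have feas: "lp_feasible V E w y'"
    unfolding lp_feasible_def
  proof (intro conjI ballI)
    fix Q assume "Q \<in> ?M" then show "0 \<le> y' Q" by (simp add: y'_def)
  next
    fix v assume v: "v \<in> V"
    let ?Mv = "{Q\<in>?M. v \<in> Q}"
    have fMv: "finite ?Mv" using fM by simp
    have "(\<Sum>Q\<in>?Mv. card {C\<in>\<C>. g C = Q}) = (\<Sum>C\<in>\<C>. card {Q\<in>?Mv. g C = Q})"
      using dc[OF fMv C(1), of "\<lambda>Q C. g C = Q"] .
    also have "\<dots> = (\<Sum>C\<in>\<C>. if v \<in> g C then 1 else 0)"
    proof (rule sum.cong)
      fix C assume "C \<in> \<C>"
      then have "{Q\<in>?Mv. g C = Q} = (if v \<in> g C then {g C} else {})" using g by auto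
      then show "card {Q\<in>?Mv. g C = Q} = (if v \<in> g C then 1 else 0)" by simp
    qed simp
    also have "\<dots> = card {C\<in>\<C>. v \<in> g C}"
      using C(1) by (simp add: sum.If_cases Int_def)
    finally have eq: "(\<Sum>Q\<in>?Mv. card {C\<in>\<C>. g C = Q}) = card {C\<in>\<C>. v \<in> g C}" .
    have "\<forall>i\<in>{..<m v}. \<exists>C\<in>\<C>. (v, i) \<in> C"
    proof
      fix i assume "i \<in> {..<m v}"
      then have "(v, i) \<in> W" using v by (simp add: W_def)
      then show "\<exists>C\<in>\<C>. (v, i) \<in> C" using C(4) by blast
    qed
    then obtain h where h: "\<forall>i\<in>{..<m v}. h i \<in> \<C> \<and> (v, i) \<in> h i" by metis
    have "inj_on h {..<m v}"
    proof (rule inj_onI)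
      fix i j assume i: "i \<in> {..<m v}" and j: "j \<in> {..<m v}" and e: "h i = h j"
      show "i = j"
      proof (rule ccontr)
        assume ij: "i \<noteq> j"
        have "clique W F0 (h i)" using h i C(3) by blast
        moreover have "(v, i) \<in> h i" "(v, j) \<in> h i" using h i j e by auto
        ultimately have "F0 (v, i) (v, j)" using ij by (simp add: clique_def)
        then show False using irr v by (simp add: F0_def)
      qed
    qed
    moreover have "h ` {..<m v} \<subseteq> {C\<in>\<C>. v \<in> g C}"
    proof
      fix C assume "C \<in> h ` {..<m v}"
      then obtain i where i: "i \<in> {..<m v}" "C = h i" by blast
      then have "C \<in> \<C>" "(v, i) \<in> C" using h by auto
      then have "v \<in> fst ` C" by force
      then show "C \<in> {C\<in>\<C>. v \<in> g C}" using g \<open>C \<in> \<C>\<close> by blast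
    qed
    ultimately have "m v \<le> card {C\<in>\<C>. v \<in> g C}"
      using card_inj_on_le[of h "{..<m v}" "{C\<in>\<C>. v \<in> g C}"] C(1) by simp
    then have "(of_nat (m v) :: rat) \<le> of_nat (\<Sum>Q\<in>?Mv. card {C\<in>\<C>. g C = Q})"
      by (simp only: eq of_nat_le_iff)
    then have "w v * of_nat d \<le> (\<Sum>Q\<in>?Mv. of_nat (card {C\<in>\<C>. g C = Q}))"
      by (simp only: mv[OF v] of_nat_sum)
    then have "w v \<le> (\<Sum>Q\<in>?Mv. of_nat (card {C\<in>\<C>. g C = Q})) / of_nat d"
      using d(1) by (simp add: pos_le_divide_eq)
    then show "w v \<le> sum y' ?Mv" unfolding y'_def by (simp add: sum_divide_distrib[symmetric])
  qed
  have "sum y' ?M \<le> cost E w V"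
    unfolding sumy using cardC d(1) by (simp add: pos_divide_le_eq)
  then show ?thesis using feas by blast
qed


lemma money_le:
  assumes "finite V" "\<forall>Q\<in>maximal_cliques V E. y Q \<ge> 0"
  shows "money V E y S \<le> sum y (maximal_cliques V E)"
  unfolding money_def
  by (rule sum_mono2) (use assms max_clique_fin[OF assms(1)] in auto)

theorem theorem17:
  fixes V :: "'a set" and E :: "'a \<Rightarrow> 'a \<Rightarrow> bool"
    and w :: "'a \<Rightarrow> rat" and y :: "'a set \<Rightarrow> rat"
  assumes "graph V E"
    and "perfect V E"
    and "\<forall>v\<in>V. w v \<ge> 0"
    and "\<forall>Q\<in>maximal_cliques V E. y Q \<ge> 0"
  shows "core_imputation V E w y \<longleftrightarrow> lp_optimal V E w y"
proof -
  let ?M = "maximal_cliques V E"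
  have fin: "finite V" using assms(1) by (simp add: graph_def)
  have irr: "\<forall>v\<in>V. \<not> E v v" using assms(1) by (simp add: graph_def)
  obtain IV where IV: "stable_set V E IV" "cost E w V = sum w IV"
    using cost_attained[OF fin] by blast
  show ?thesis
  proof
    assume core: "core_imputation V E w y"
    then have sumy: "sum y ?M = cost E w V" and mon: "\<forall>S\<subseteq>V. money V E y S \<ge> cost E w S"
      by (auto simp: core_imputation_def imputation_def)
    have feas: "lp_feasible V E w y"
      unfolding lp_feasible_def
    proof (intro conjI ballI)
      fix Q assume "Q \<in> ?M" then show "0 \<le> y Q" using assms(4) by blast
    next
      fix v assume v: "v \<in> V"
      have st: "stable_set {v} E {v}" using irr v by (simp add: stable_set_def)
      have "w v \<le> cost E w {v}" using cost_ge[OF _ st, of w] by simp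
      also have "\<dots> \<le> money V E y {v}" using mon v by blast
      also have "money V E y {v} = sum y {Q \<in> ?M. v \<in> Q}"
        unfolding money_def by (rule sum.cong) auto
      finally show "w v \<le> sum y {Q \<in> ?M. v \<in> Q}" .
    qed
    show "lp_optimal V E w y"
      unfolding lp_optimal_def
    proof (intro conjI allI impI)
      show "lp_feasible V E w y" by fact
      fix y' assume f': "lp_feasible V E w y'"
      have nn: "\<forall>Q\<in>?M. y' Q \<ge> 0" and cov: "\<forall>v\<in>V. sum y' {Q \<in> ?M. v \<in> Q} \<ge> w v"
        using f' by (auto simp: lp_feasible_def)
      have "sum y ?M = sum w IV" using sumy IV by simp
      also have "\<dots> \<le> money V E y' V" using weak[OF fin nn cov _ IV(1)] by simp
      also have "\<dots> \<le> sum y' ?M" using money_le[OF fin nn] .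
      finally show "sum y ?M \<le> sum y' ?M" .
    qed
  next
    assume opt: "lp_optimal V E w y"
    then have feas: "lp_feasible V E w y"
      and mn: "\<And>y'. lp_feasible V E w y' \<Longrightarrow> sum y ?M \<le> sum y' ?M"
      by (auto simp: lp_optimal_def)
    have nn: "\<forall>Q\<in>?M. y Q \<ge> 0" and cov: "\<forall>v\<in>V. sum y {Q \<in> ?M. v \<in> Q} \<ge> w v"
      using feas by (auto simp: lp_feasible_def)
    obtain y' where y': "lp_feasible V E w y'" "sum y' ?M \<le> cost E w V"
      using strong[OF assms(1,2,3)] by blast
    have le: "sum y ?M \<le> cost E w V" using mn[OF y'(1)] y'(2) by simp
    have "cost E w V \<le> money V E y V" using weak[OF fin nn cov _ IV(1)] IV(2) by simp
    also have "\<dots> \<le> sum y ?M" using money_le[OF fin nn] .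
    finally have ge: "cost E w V \<le> sum y ?M" .
    have mon: "\<forall>S\<subseteq>V. money V E y S \<ge> cost E w S"
    proof (intro allI impI)
      fix S assume S: "S \<subseteq> V"
      have fS: "finite S" using S fin finite_subset by blast
      obtain I where I: "stable_set S E I" "cost E w S = sum w I"
        using cost_attained[OF fS] by blast
      show "money V E y S \<ge> cost E w S" using weak[OF fin nn cov S I(1)] I(2) by simp
    qed
    show "core_imputation V E w y"
      unfolding core_imputation_def imputation_def
      using nn le ge mon by simp
  qed
qed

end
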